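(* Let $P\in\mathcal S^d$ be such that $\mathcal N_1(P)$ and $S_2:=\mathcal N_2(P)-\mathcal L_{12}(P)^\top\mathcal N_1(P)^{-1}\mathcal L_{12}(P)$ are invertible, and set $$K_2^*=\big(\mathcal L_{12}(P)^\top\mathcal N_1(P)^{-1}\mathcal L_{12}(P)-\mathcal N_2(P)\big)^{-1}\big(\mathcal L_2(P)^\top-\mathcal L_{12}(P)^\top\mathcal N_1(P)^{-1}\mathcal L_1(P)^\top\big).$$ Define $\mathcal M^{2*}(P)=\mathcal M(P)+\mathcal L_2(P)K_2^*+(\mathcal L_2(P)K_2^* )^\top+(K_2^* )^\top\mathcal N_2(P)K_2^*$, $\mathcal L^{2*}_1(P)=\mathcal L_1(P)+(\mathcal L_{12}(P)K_2^* )^\top$, $\mathcal N^{2*}_1(P)=\mathcal N_1(P)$. Then $P$ solves $0=\mathcal M^{2*}(P)-\mathcal L^{2*}_1(P)\mathcal N^{2*}_1(P)^{-1}\mathcal L^{2*}_1(P)^\top$ if and only if $P$ solves $0=\mathcal M(P)-\mathcal L(P)\mathcal N(P)^{-1}\mathcal L(P)^\top$.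
   Context: $\mathcal S^d$: symmetric $d\times d$ matrices. Fix $d,\ell\ge1$, $\gamma\in[0,1]$, $A\in\mathbb R^{d\times d}$, $B_1,B_2\in\mathbb R^{d\times\ell}$, $Q\in\mathcal S^d$, $R_1,R_2\in\mathcal S^\ell$. For $P\in\mathcal S^d$: $\mathcal M(P)=\gamma A^\top PA-P+Q$, $\mathcal L_i(P)=\gamma A^\top PB_i$ ($i=1,2$), $\mathcal L_{12}(P)=\gamma B_1^\top PB_2$, $\mathcal N_1(P)=\gamma B_1^\top PB_1+R_1$, $\mathcal N_2(P)=\gamma B_2^\top PB_2-R_2$, $\mathcal L(P)=[\mathcal L_1(P),\mathcal L_2(P)]\in\mathbb R^{d\times2\ell}$, $\mathcal N(P)=\begin{bmatrix}\mathcal N_1(P)&\mathcal L_{12}(P)\\\mathcal L_{12}(P)^\top&\mathcal N_2(P)\end{bmatrix}$ (which is invertible under the hypotheses). *)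

theory Defs
  imports "HOL-Analysis.Analysis"
begin

text \<open>Matrices are Cartesian-product matrices: a (m x n) real matrix is real^'n^'m.
  State dimension d is the finite type 'd, control dimension l is the finite type 'l;
  the stacked control dimension 2l is the sum type 'l + 'l.\<close>

definition Mop :: "real \<Rightarrow> real^'d^'d \<Rightarrow> real^'d^'d \<Rightarrow> real^'d^'d \<Rightarrow> real^'d^'d" where
  "Mop \<gamma> A Q P = \<gamma> *\<^sub>R (transpose A ** P ** A) - P + Q"

definition Lop :: "real \<Rightarrow> real^'d^'d \<Rightarrow> real^'l^'d \<Rightarrow> real^'d^'d \<Rightarrow> real^'l^'d" where
  "Lop \<gamma> A B P = \<gamma> *\<^sub>R (transpose A ** P ** B)"

definition L12op :: "real \<Rightarrow> real^'l^'d \<Rightarrow> real^'l^'d \<Rightarrow> real^'d^'d \<Rightarrow> real^'l^'l" where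
  "L12op \<gamma> B1 B2 P = \<gamma> *\<^sub>R (transpose B1 ** P ** B2)"

definition N1op :: "real \<Rightarrow> real^'l^'d \<Rightarrow> real^'l^'l \<Rightarrow> real^'d^'d \<Rightarrow> real^'l^'l" where
  "N1op \<gamma> B1 R1 P = \<gamma> *\<^sub>R (transpose B1 ** P ** B1) + R1"

definition N2op :: "real \<Rightarrow> real^'l^'d \<Rightarrow> real^'l^'l \<Rightarrow> real^'d^'d \<Rightarrow> real^'l^'l" where
  "N2op \<gamma> B2 R2 P = \<gamma> *\<^sub>R (transpose B2 ** P ** B2) - R2"

definition Lfull :: "real \<Rightarrow> real^'d^'d \<Rightarrow> real^'l^'d \<Rightarrow> real^'l^'d \<Rightarrow> real^'d^'d \<Rightarrow> real^('l + 'l)^'d" where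
  "Lfull \<gamma> A B1 B2 P = (\<chi> i j. case j of Inl k \<Rightarrow> Lop \<gamma> A B1 P $ i $ k
                                        | Inr k \<Rightarrow> Lop \<gamma> A B2 P $ i $ k)"

definition Nfull :: "real \<Rightarrow> real^'l^'d \<Rightarrow> real^'l^'d \<Rightarrow> real^'l^'l \<Rightarrow> real^'l^'l \<Rightarrow> real^'d^'d
    \<Rightarrow> real^('l + 'l)^('l + 'l)" where
  "Nfull \<gamma> B1 B2 R1 R2 P = (\<chi> i j. case (i, j) of
      (Inl a, Inl b) \<Rightarrow> N1op \<gamma> B1 R1 P $ a $ b
    | (Inl a, Inr b) \<Rightarrow> L12op \<gamma> B1 B2 P $ a $ b
    | (Inr a, Inl b) \<Rightarrow> transpose (L12op \<gamma> B1 B2 P) $ a $ b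
    | (Inr a, Inr b) \<Rightarrow> N2op \<gamma> B2 R2 P $ a $ b)"

definition K2star :: "real \<Rightarrow> real^'d^'d \<Rightarrow> real^'l^'d \<Rightarrow> real^'l^'d \<Rightarrow> real^'l^'l \<Rightarrow> real^'l^'l
    \<Rightarrow> real^'d^'d \<Rightarrow> real^'d^'l" where
  "K2star \<gamma> A B1 B2 R1 R2 P =
     matrix_inv (transpose (L12op \<gamma> B1 B2 P) ** matrix_inv (N1op \<gamma> B1 R1 P) ** L12op \<gamma> B1 B2 P
                 - N2op \<gamma> B2 R2 P)
     ** (transpose (Lop \<gamma> A B2 P)
         - transpose (L12op \<gamma> B1 B2 P) ** matrix_inv (N1op \<gamma> B1 R1 P) ** transpose (Lop \<gamma> A B1 P))"

definition M2star :: "real \<Rightarrow> real^'d^'d \<Rightarrow> real^'l^'d \<Rightarrow> real^'l^'d \<Rightarrow> real^'d^'d \<Rightarrow> real^'l^'l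
    \<Rightarrow> real^'l^'l \<Rightarrow> real^'d^'d \<Rightarrow> real^'d^'d" where
  "M2star \<gamma> A B1 B2 Q R1 R2 P =
     (let K = K2star \<gamma> A B1 B2 R1 R2 P in
      Mop \<gamma> A Q P + Lop \<gamma> A B2 P ** K + transpose (Lop \<gamma> A B2 P ** K)
      + transpose K ** N2op \<gamma> B2 R2 P ** K)"

definition L1star :: "real \<Rightarrow> real^'d^'d \<Rightarrow> real^'l^'d \<Rightarrow> real^'l^'d \<Rightarrow> real^'l^'l \<Rightarrow> real^'l^'l
    \<Rightarrow> real^'d^'d \<Rightarrow> real^'l^'d" where
  "L1star \<gamma> A B1 B2 R1 R2 P =
     Lop \<gamma> A B1 P + transpose (L12op \<gamma> B1 B2 P ** K2star \<gamma> A B1 B2 R1 R2 P)"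

definition N1star :: "real \<Rightarrow> real^'l^'d \<Rightarrow> real^'l^'l \<Rightarrow> real^'d^'d \<Rightarrow> real^'l^'l" where
  "N1star \<gamma> B1 R1 P = N1op \<gamma> B1 R1 P"

end

theory Submission imports Defs begin

lemma mneg_r: "(A::real^'n^'m) ** (- B) = - (A ** (B::real^'p^'n))"
  by (simp add: matrix_matrix_mult_def vec_eq_iff sum_negf)
lemma mneg_l: "(- A::real^'n^'m) ** B = - (A ** (B::real^'p^'n))"
  by (simp add: matrix_matrix_mult_def vec_eq_iff sum_negf)
lemma mdiff_r: "(A::real^'n^'m) ** (B - C) = A ** B - A ** (C::real^'p^'n)"
  by (simp add: matrix_matrix_mult_def vec_eq_iff sum_subtractf algebra_simps)
lemma mdiff_l: "((A::real^'n^'m) - B) ** C = A ** C - B ** (C::real^'p^'n)"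
  by (simp add: matrix_matrix_mult_def vec_eq_iff sum_subtractf algebra_simps)
lemma madd_l: "((A::real^'n^'m) + B) ** C = A ** C + B ** (C::real^'p^'n)"
  by (simp add: matrix_matrix_mult_def vec_eq_iff sum.distrib algebra_simps)
lemma tr_add: "transpose ((A::real^'n^'m) + B) = transpose A + transpose B"
  by (simp add: transpose_def vec_eq_iff)
lemma tr_diff: "transpose ((A::real^'n^'m) - B) = transpose A - transpose B"
  by (simp add: transpose_def vec_eq_iff)
lemma tr_neg: "transpose (- (A::real^'n^'m)) = - transpose A"
  by (simp add: transpose_def vec_eq_iff)

lemma inv_props:
  fixes A :: "real^'n^'n"
  assumes "invertible A"
  shows "A ** matrix_inv A = mat 1" "matrix_inv A ** A = mat 1"
  using someI_ex[OF assms[unfolded invertible_def]] unfolding matrix_inv_def by auto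

lemma inv_unique:
  fixes A B :: "real^'n^'n"
  assumes "A ** B = mat 1"
  shows "matrix_inv A = B"
proof -
  have inv: "invertible A" using assms invertible_right_inverse by blast
  have "B ** A = mat 1" using assms matrix_left_right_inverse by blast
  then have "matrix_inv A = (B ** A) ** matrix_inv A" by simp
  also have "... = B" using inv_props(1)[OF inv] by (simp add: matrix_mul_assoc[symmetric])
  finally show ?thesis .
qed

lemma lhs_alg:
  fixes M :: "real^'d^'d" and L1 L2 :: "real^'l^'d" and C N1i N2 S Si :: "real^'l^'l"
    and W K :: "real^'d^'l"
  assumes SS: "Si ** S = mat 1" and tSi: "transpose Si = Si" and tN: "transpose N1i = N1i"
    and L2: "L2 = transpose W + L1 ** N1i ** C" and N2: "N2 = S + transpose C ** N1i ** C"
    and K: "K = - (Si ** W)"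
  shows "M + L2 ** K + transpose (L2 ** K) + transpose K ** N2 ** K
     - (L1 + transpose (C ** K)) ** N1i ** transpose (L1 + transpose (C ** K))
     = M - L1 ** N1i ** transpose L1 - transpose W ** Si ** W"
proof -
  have c: "Si ** (S ** X) = X" for X :: "real^'d^'l"
    by (simp add: matrix_mul_assoc SS)
  show ?thesis unfolding L2 N2 K
    by (simp add: matrix_add_ldistrib madd_l mdiff_r mdiff_l mneg_r mneg_l tr_add tr_diff tr_neg
        matrix_transpose_mul matrix_mul_assoc[symmetric] tSi tN c algebra_simps)
qed


lemma sum_UNIV_plus:
  "(\<Sum>k\<in>(UNIV::('a::finite + 'b::finite) set). f k) = (\<Sum>a\<in>UNIV. f (Inl a)) + (\<Sum>b\<in>UNIV. f (Inr b))"
  using sum.Plus[of "UNIV::'a set" "UNIV::'b set" f] by (simp add: comp_def)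

definition blk :: "real^'b^'a \<Rightarrow> real^'c^'a \<Rightarrow> real^'b^'e \<Rightarrow> real^'c^'e \<Rightarrow> real^('b+'c)^('a+'e)" where
  "blk X Y Z W = (\<chi> i j. case i of Inl a \<Rightarrow> (case j of Inl b \<Rightarrow> X$a$b | Inr c \<Rightarrow> Y$a$c)
                                   | Inr e \<Rightarrow> (case j of Inl b \<Rightarrow> Z$e$b | Inr c \<Rightarrow> W$e$c))"

definition rowb :: "real^'b^'a \<Rightarrow> real^'c^'a \<Rightarrow> real^('b+'c)^'a" where
  "rowb X Y = (\<chi> i j. case j of Inl b \<Rightarrow> X$i$b | Inr c \<Rightarrow> Y$i$c)"

lemma blk_mult:
  fixes X :: "real^'b::finite^'a" and Y :: "real^'c::finite^'a" and Z :: "real^'b^'e" and W :: "real^'c^'e"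
    and X' :: "real^'f^'b" and Y' :: "real^'g^'b" and Z' :: "real^'f^'c" and W' :: "real^'g^'c"
  shows "blk X Y Z W ** blk X' Y' Z' W' = blk (X**X'+Y**Z') (X**Y'+Y**W') (Z**X'+W**Z') (Z**Y'+W**W')"
  by (auto simp: vec_eq_iff matrix_matrix_mult_def blk_def sum_UNIV_plus split: sum.split)

lemma rowb_mult:
  fixes X :: "real^'b::finite^'a" and Y :: "real^'c::finite^'a"
    and X' :: "real^'f^'b" and Y' :: "real^'g^'b" and Z' :: "real^'f^'c" and W' :: "real^'g^'c"
  shows "rowb X Y ** blk X' Y' Z' W' = rowb (X**X'+Y**Z') (X**Y'+Y**W')"
  by (auto simp: vec_eq_iff matrix_matrix_mult_def blk_def rowb_def sum_UNIV_plus split: sum.split)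

lemma rowb_tr:
  fixes X :: "real^'b::finite^'a" and Y :: "real^'c::finite^'a" and U :: "real^'b^'e" and V :: "real^'c^'e"
  shows "rowb X Y ** transpose (rowb U V) = X ** transpose U + Y ** transpose V"
  by (auto simp: vec_eq_iff matrix_matrix_mult_def transpose_def rowb_def sum_UNIV_plus split: sum.split)

lemma mat1_blk: "(mat 1 :: real^('a::finite+'b::finite)^('a+'b)) = blk (mat 1) 0 0 (mat 1)"
  by (auto simp: vec_eq_iff mat_def blk_def split: sum.split)

lemma Nfull_blk: "Nfull \<gamma> B1 B2 R1 R2 P = blk (N1op \<gamma> B1 R1 P) (L12op \<gamma> B1 B2 P) (transpose (L12op \<gamma> B1 B2 P)) (N2op \<gamma> B2 R2 P)"
  by (auto simp: vec_eq_iff Nfull_def blk_def split: sum.split)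

lemma Lfull_rowb: "Lfull \<gamma> A B1 B2 P = rowb (Lop \<gamma> A B1 P) (Lop \<gamma> A B2 P)"
  by (auto simp: vec_eq_iff Lfull_def rowb_def split: sum.split)

lemma blk_inv:
  fixes N1 N1i C N2 S Si :: "real^'l::finite^'l"
  assumes a: "N1 ** N1i = mat 1" and b: "S ** Si = mat 1" and N2: "N2 = S + transpose C ** N1i ** C"
  shows "blk N1 C (transpose C) N2 ** blk (N1i + N1i ** C ** Si ** transpose C ** N1i) (- (N1i ** C ** Si))
           (- (Si ** transpose C ** N1i)) Si = mat 1"
proof -
  have c1: "N1 ** (N1i ** X) = X" for X :: "real^'l^'l"
    by (simp add: matrix_mul_assoc a)
  have c2: "S ** (Si ** X) = X" for X :: "real^'l^'l"
    by (simp add: matrix_mul_assoc b)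
  show ?thesis unfolding blk_mult mat1_blk N2
    by (simp add: matrix_add_ldistrib madd_l mdiff_r mdiff_l mneg_r mneg_l
        matrix_mul_assoc[symmetric] c1 c2 a b algebra_simps)
qed

lemma rhs_alg:
  fixes L1 L2 :: "real^'l^'d" and C N1i S Si :: "real^'l^'l"
    and W :: "real^'d^'l"
  assumes tSi: "transpose Si = Si" and tN: "transpose N1i = N1i"
    and L2: "L2 = transpose W + L1 ** N1i ** C"
  shows "rowb L1 L2 ** blk (N1i + N1i ** C ** Si ** transpose C ** N1i) (- (N1i ** C ** Si))
           (- (Si ** transpose C ** N1i)) Si ** transpose (rowb L1 L2)
     = L1 ** N1i ** transpose L1 + transpose W ** Si ** W"
  unfolding rowb_mult rowb_tr L2
  by (simp add: matrix_add_ldistrib madd_l mdiff_r mdiff_l mneg_r mneg_l tr_add tr_diff tr_neg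
        matrix_transpose_mul matrix_mul_assoc[symmetric] tSi tN algebra_simps)

theorem mainTheorem10:
  fixes \<gamma> :: real
    and A :: "real^'d^'d" and B1 B2 :: "real^'l^'d"
    and Q P :: "real^'d^'d" and R1 R2 :: "real^'l^'l"
  assumes "0 \<le> \<gamma>" and "\<gamma> \<le> 1"
    and "transpose Q = Q" and "transpose R1 = R1" and "transpose R2 = R2"
    and "transpose P = P"
    and "invertible (N1op \<gamma> B1 R1 P)"
    and "invertible (N2op \<gamma> B2 R2 P
           - transpose (L12op \<gamma> B1 B2 P) ** matrix_inv (N1op \<gamma> B1 R1 P) ** L12op \<gamma> B1 B2 P)"
  shows "(M2star \<gamma> A B1 B2 Q R1 R2 P
            - L1star \<gamma> A B1 B2 R1 R2 P ** matrix_inv (N1star \<gamma> B1 R1 P)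
              ** transpose (L1star \<gamma> A B1 B2 R1 R2 P) = 0)
     \<longleftrightarrow> (Mop \<gamma> A Q P
            - Lfull \<gamma> A B1 B2 P ** matrix_inv (Nfull \<gamma> B1 B2 R1 R2 P)
              ** transpose (Lfull \<gamma> A B1 B2 P) = 0)"
  proof -
  define N1 where "N1 = N1op \<gamma> B1 R1 P"
  define C where "C = L12op \<gamma> B1 B2 P"
  define N2 where "N2 = N2op \<gamma> B2 R2 P"
  define L1 where "L1 = Lop \<gamma> A B1 P"
  define L2 where "L2 = Lop \<gamma> A B2 P"
  define M where "M = Mop \<gamma> A Q P"
  define N1i where "N1i = matrix_inv N1"
  define S where "S = N2 - transpose C ** N1i ** C"
  define Si where "Si = matrix_inv S"
  define W where "W = transpose L2 - transpose C ** N1i ** transpose L1"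
  have iN1: "invertible N1" using assms(7) by (simp add: N1_def)
  have iS: "invertible S" using assms(8) by (simp add: S_def N1i_def N1_def C_def N2_def)
  have a1: "N1 ** N1i = mat 1" "N1i ** N1 = mat 1" using inv_props[OF iN1] by (auto simp: N1i_def)
  have a2: "S ** Si = mat 1" "Si ** S = mat 1" using inv_props[OF iS] by (auto simp: Si_def)
  have tN1: "transpose N1 = N1"
    using assms(4,6) by (simp add: N1_def N1op_def tr_add transpose_scalar matrix_transpose_mul matrix_mul_assoc)
  have tN2: "transpose N2 = N2"
    using assms(5,6) by (simp add: N2_def N2op_def tr_diff transpose_scalar matrix_transpose_mul matrix_mul_assoc)
  have tN1i: "transpose N1i = N1i"
  proof -
    have "transpose N1i ** N1 = mat 1"
      using arg_cong[OF a1(1), of transpose] tN1 by (simp add: matrix_transpose_mul)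
    then have "N1 ** transpose N1i = mat 1" using matrix_left_right_inverse by blast
    then have "matrix_inv N1 = transpose N1i" by (rule inv_unique)
    then show ?thesis by (simp add: N1i_def)
  qed
  have tS: "transpose S = S"
    by (simp add: S_def tr_diff tN2 tN1i matrix_transpose_mul matrix_mul_assoc)
  have tSi: "transpose Si = Si"
  proof -
    have "transpose Si ** S = mat 1"
      using arg_cong[OF a2(1), of transpose] tS by (simp add: matrix_transpose_mul)
    then have "S ** transpose Si = mat 1" using matrix_left_right_inverse by blast
    then have "matrix_inv S = transpose Si" by (rule inv_unique)
    then show ?thesis by (simp add: Si_def)
  qed
  have N2e: "N2 = S + transpose C ** N1i ** C" by (simp add: S_def)
  have L2e: "L2 = transpose W + L1 ** N1i ** C"
    by (simp add: W_def tr_diff matrix_transpose_mul tN1i matrix_mul_assoc)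
  have invneg: "matrix_inv (transpose C ** N1i ** C - N2) = - Si"
  proof (rule inv_unique)
    have "transpose C ** N1i ** C - N2 = - S" by (simp add: S_def)
    then show "(transpose C ** N1i ** C - N2) ** - Si = mat 1" by (simp add: mneg_r mneg_l a2)
  qed
  have K: "K2star \<gamma> A B1 B2 R1 R2 P = - (Si ** W)"
    unfolding K2star_def
    by (simp add: N1_def[symmetric] C_def[symmetric] N2_def[symmetric] L1_def[symmetric]
        L2_def[symmetric] N1i_def[symmetric] invneg W_def[symmetric] mneg_l)
  have Ninv: "matrix_inv (Nfull \<gamma> B1 B2 R1 R2 P) = blk (N1i + N1i ** C ** Si ** transpose C ** N1i) (- (N1i ** C ** Si))
           (- (Si ** transpose C ** N1i)) Si"
    unfolding Nfull_blk
    by (rule inv_unique) (simp add: blk_inv[OF a1(1) a2(1) N2e] N1_def[symmetric] C_def[symmetric] N2_def[symmetric])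
  have lhs: "M2star \<gamma> A B1 B2 Q R1 R2 P
            - L1star \<gamma> A B1 B2 R1 R2 P ** matrix_inv (N1star \<gamma> B1 R1 P)
              ** transpose (L1star \<gamma> A B1 B2 R1 R2 P) = M - L1 ** N1i ** transpose L1 - transpose W ** Si ** W"
    unfolding M2star_def L1star_def N1star_def Let_def K
    using lhs_alg[OF a2(2) tSi tN1i L2e N2e refl, of M]
    by (simp add: N1_def[symmetric] C_def[symmetric] N2_def[symmetric] L1_def[symmetric]
        L2_def[symmetric] N1i_def[symmetric] M_def[symmetric])
  have rhs: "Mop \<gamma> A Q P
            - Lfull \<gamma> A B1 B2 P ** matrix_inv (Nfull \<gamma> B1 B2 R1 R2 P)
              ** transpose (Lfull \<gamma> A B1 B2 P) = M - L1 ** N1i ** transpose L1 - transpose W ** Si ** W"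
    unfolding Ninv Lfull_rowb
    using rhs_alg[OF tSi tN1i L2e]
    by (simp add: L1_def[symmetric] L2_def[symmetric] M_def[symmetric])
  show ?thesis unfolding lhs rhs ..
qed

end
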